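(* Let $|\psi\rangle\in(\mathbb{C}^d)^{\otimes N}$ be a normalized state, let $0<\alpha<1$, and suppose $s\in\mathbb{R}$ satisfies $S^\alpha(\rho_{[1..k]})\le s$ for all $k=1,\dots,N-1$, where $\rho_{[1..k]}$ is the reduced density operator of the first $k$ sites. Then for every $\varepsilon>0$ and every integer $$D\ge (1-\alpha)\,e^{s}\Big(\frac{2(N-1)}{\varepsilon}\Big)^{\alpha/(1-\alpha)}$$ there is an open-boundary MPS $|\psi_D\rangle$ of bond dimension at most $D$ with $\||\psi\rangle-|\psi_D\rangle\|^2\le\varepsilon$. In particular, if $s\le \kappa\log N+s_0$ for constants $\kappa,s_0$, then an accuracy $\varepsilon=\varepsilon_0/N$ is achievable with a bond dimension $D$ that grows only polynomially in $N$.
   Context: The Rényi entropy of order $\alpha\in(0,1)$ is $S^\alpha(\rho)=\frac{1}{1-\alpha}\log\mathrm{Tr}(\rho^\alpha)$ (natural logarithm). An open-boundary MPS with bond dimension at most $D$ on $N$ sites of local dimension $d$ is a vector $\sum_{i_1,\dots,i_N}A^{[1]i_1}\cdots A^{[N]i_N}|i_1\cdots i_N\rangle$ with $A^{[k]i}$ complex $D_k\times D_{k+1}$ matrices, $D_1=D_{N+1}=1$, $D_k\le D$. *)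

theory Defs
  imports Complex_Main "Jordan_Normal_Form.Char_Poly"
begin

text \<open>Basis of (C^d)^{\<otimes> n}: index tuples of length n with entries in {0..<d}.
  A state is a function from such tuples to complex amplitudes.\<close>
definition tuples :: "nat \<Rightarrow> nat \<Rightarrow> nat list set" where
  "tuples d n = {xs. length xs = n \<and> set xs \<subseteq> {..<d}}"

text \<open>Base-d decoding of a matrix index i < d^k into a tuple of length k (big-endian).\<close>
fun dec :: "nat \<Rightarrow> nat \<Rightarrow> nat \<Rightarrow> nat list" where
  "dec d 0 i = []"
| "dec d (Suc k) i = (i div d ^ k) # dec d k (i mod d ^ k)"

definition normalized :: "nat \<Rightarrow> nat \<Rightarrow> (nat list \<Rightarrow> complex) \<Rightarrow> bool" where
  "normalized d N psi \<longleftrightarrow> (\<Sum>xs\<in>tuples d N. (cmod (psi xs))^2) = 1"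

definition rdm :: "nat \<Rightarrow> nat \<Rightarrow> (nat list \<Rightarrow> complex) \<Rightarrow> nat \<Rightarrow> complex mat" where
  "rdm d N psi k = mat (d ^ k) (d ^ k)
     (\<lambda>(i, j). \<Sum>y\<in>tuples d (N - k). psi (dec d k i @ y) * cnj (psi (dec d k j @ y)))"

text \<open>Tr(rho^alpha) via the spectral calculus: sum over the eigenvalues (with algebraic
  multiplicity) of lambda^alpha.\<close>
definition tr_pow :: "real \<Rightarrow> complex mat \<Rightarrow> real" where
  "tr_pow a rho = (\<Sum>z\<in>{z. poly (char_poly rho) z = 0}.
       real (order z (char_poly rho)) * (Re z) powr a)"

definition renyi :: "real \<Rightarrow> complex mat \<Rightarrow> real" where
  "renyi a rho = 1 / (1 - a) * ln (tr_pow a rho)"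

text \<open>Open-boundary MPS: A k i is the matrix at site k (1..N) for physical index i,
  of size Dims k x Dims (k+1).\<close>
fun mat_chain :: "(nat \<Rightarrow> nat \<Rightarrow> complex mat) \<Rightarrow> (nat \<Rightarrow> nat) \<Rightarrow> nat \<Rightarrow> nat list \<Rightarrow> complex mat" where
  "mat_chain A Dims k [] = 1\<^sub>m (Dims k)"
| "mat_chain A Dims k (x # xs) = A k x * mat_chain A Dims (Suc k) xs"

definition mps_vec :: "(nat \<Rightarrow> nat \<Rightarrow> complex mat) \<Rightarrow> (nat \<Rightarrow> nat) \<Rightarrow> nat list \<Rightarrow> complex" where
  "mps_vec A Dims xs = mat_chain A Dims 1 xs $$ (0, 0)"

definition is_mps :: "nat \<Rightarrow> nat \<Rightarrow> nat \<Rightarrow> (nat list \<Rightarrow> complex) \<Rightarrow> bool" where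
  "is_mps d N D phi \<longleftrightarrow> (\<exists>A Dims.
     Dims 1 = 1 \<and> Dims (N + 1) = 1 \<and> (\<forall>k\<in>{1..N+1}. Dims k \<le> D) \<and>
     (\<forall>k\<in>{1..N}. \<forall>i<d. A k i \<in> carrier_mat (Dims k) (Dims (Suc k))) \<and>
     (\<forall>xs\<in>tuples d N. phi xs = mps_vec A Dims xs))"

definition dist_sq :: "nat \<Rightarrow> nat \<Rightarrow> (nat list \<Rightarrow> complex) \<Rightarrow> (nat list \<Rightarrow> complex) \<Rightarrow> real" where
  "dist_sq d N psi phi = (\<Sum>xs\<in>tuples d N. (cmod (psi xs - phi xs))^2)"

end

theory Submission
  imports Defs "Jordan_Normal_Form.Schur_Decomposition" "HOL-Analysis.Convex"
begin


definition adjm :: "complex mat \<Rightarrow> complex mat" where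
  "adjm A = mat (dim_col A) (dim_row A) (\<lambda>(i,j). cnj (A $$ (j,i)))"

lemma adjm_dims[simp]: "dim_row (adjm A) = dim_col A" "dim_col (adjm A) = dim_row A"
  by (auto simp: adjm_def)

lemma adjm_carrier[simp]: "A \<in> carrier_mat n m \<Longrightarrow> adjm A \<in> carrier_mat m n"
  by (auto simp: adjm_def)

lemma adjm_index[simp]: "i < dim_col A \<Longrightarrow> j < dim_row A \<Longrightarrow> adjm A $$ (i,j) = cnj (A $$ (j,i))"
  by (auto simp: adjm_def)

lemma adjm_adjm[simp]: "adjm (adjm A) = A"
  by (rule eq_matI, auto)

lemma mult_entry:
  assumes "i < dim_row A" "j < dim_col B" "dim_col A = dim_row B"
  shows "(A * B) $$ (i,j) = (\<Sum>k<dim_row B. A $$ (i,k) * B $$ (k,j))"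
  using assms by (simp add: index_mult_mat scalar_prod_def atLeast0LessThan)

lemma adjm_mult:
  assumes A: "A \<in> carrier_mat n m" and B: "B \<in> carrier_mat m p"
  shows "adjm (A * B) = adjm B * adjm A"
proof (rule eq_matI)
  fix i j assume ij: "i < dim_row (adjm B * adjm A)" "j < dim_col (adjm B * adjm A)"
  hence i: "i < p" and j: "j < n" using A B by auto
  have "adjm (A * B) $$ (i, j) = cnj ((A * B) $$ (j, i))" using i j A B by simp
  also have "(A * B) $$ (j, i) = (\<Sum>k<m. A $$ (j,k) * B $$ (k,i))"
    using i j A B by (subst mult_entry) auto
  also have "(adjm B * adjm A) $$ (i, j) = (\<Sum>k<m. adjm B $$ (i,k) * adjm A $$ (k,j))"
    using i j A B by (subst mult_entry) auto
  ultimately show "adjm (A * B) $$ (i, j) = (adjm B * adjm A) $$ (i, j)"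
    using i j A B by (simp add: mult.commute)
qed (use A B in auto)

definition diagm :: "complex list \<Rightarrow> complex mat" where
  "diagm es = mat (length es) (length es) (\<lambda>(i,j). if i = j then es ! i else 0)"

lemma diagm_carrier[simp]: "diagm es \<in> carrier_mat (length es) (length es)"
  by (simp add: diagm_def)

lemma XDY_entry:
  assumes X: "X \<in> carrier_mat n n" and Y: "Y \<in> carrier_mat n n" and l: "length es = n"
    and i: "i < n" and j: "j < n"
  shows "(X * diagm es * adjm Y) $$ (i,j) = (\<Sum>k<n. X $$ (i,k) * es ! k * cnj (Y $$ (j,k)))"
proof -
  have D: "diagm es \<in> carrier_mat n n" using diagm_carrier[of es] l by simp
  have "(X * diagm es * adjm Y) $$ (i,j) = (\<Sum>k<n. (X * diagm es) $$ (i,k) * adjm Y $$ (k,j))"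
    using X Y D i j by (subst mult_entry) auto
  also have "\<dots> = (\<Sum>k<n. X $$ (i,k) * es ! k * cnj (Y $$ (j,k)))"
  proof (rule sum.cong[OF refl])
    fix k assume k: "k \<in> {..<n}"
    have "(X * diagm es) $$ (i,k) = (\<Sum>l<n. X $$ (i,l) * diagm es $$ (l,k))"
      using X D i k by (subst mult_entry) auto
    also have "\<dots> = (\<Sum>l<n. if l = k then X $$ (i,l) * es ! l else 0)"
      using k l by (intro sum.cong refl) (auto simp: diagm_def)
    also have "\<dots> = X $$ (i,k) * es ! k"
      using k by (simp add: sum.delta')
    finally show "(X * diagm es) $$ (i,k) * adjm Y $$ (k,j) = X $$ (i,k) * es ! k * cnj (Y $$ (j,k))"
      using Y k j by simp
  qed
  finally show ?thesis .
qed

lemma cscalar_self: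
  fixes w :: "complex vec"
  shows "w \<bullet>c w = complex_of_real (\<Sum>k<dim_vec w. (cmod (w $ k))^2)"
proof -
  have "w \<bullet>c w = (\<Sum>k<dim_vec w. w $ k * cnj (w $ k))"
    unfolding scalar_prod_def by (simp add: atLeast0LessThan)
  also have "\<dots> = (\<Sum>k<dim_vec w. complex_of_real ((cmod (w $ k))^2))"
    by (rule sum.cong[OF refl]) (rule complex_norm_square[symmetric])
  also have "\<dots> = complex_of_real (\<Sum>k<dim_vec w. (cmod (w $ k))^2)"
    by (rule of_real_sum[symmetric])
  finally show ?thesis .
qed

lemma orthonormal_completion:
  fixes v :: "complex vec"
  assumes v: "v \<in> carrier_vec n" and v0: "v \<noteq> 0\<^sub>v n"
  shows "\<exists>W c. W \<in> carrier_mat n n \<and> adjm W * W = 1\<^sub>m n \<and> (\<forall>i<n. W $$ (i,0) = c * v $ i)"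
proof -
  interpret cof_vec_space n "TYPE(complex)" .
  define b where "b = basis_completion v"
  from basis_completion[OF v v0, folded b_def]
  have dist_b: "distinct b" and indep: "\<not> lin_dep (set b)" and b: "set b \<subseteq> carrier_vec n"
    and hdb: "hd b = v" and len_b: "length b = n" by auto
  have n: "n \<noteq> 0" using v0 v by (metis carrier_vecD eq_vecI index_zero_vec(2) less_nat_zero_code)
  from hdb len_b n obtain vs where bv: "b = v # vs" by (cases b, auto)
  define ws where "ws = gram_schmidt n b"
  from gram_schmidt_result[OF b dist_b indep ws_def]
  have ws: "set ws \<subseteq> carrier_vec n" "corthogonal ws" "length ws = n"
    by (auto simp: len_b)
  from gram_schmidt_hd[OF v, of vs, folded bv] have hdws: "hd ws = v" unfolding ws_def .
  have wsv: "ws ! 0 = v" using hdws ws(3) n by (metis hd_conv_nth list.size(3))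
  have wsc: "\<And>j. j < n \<Longrightarrow> ws ! j \<in> carrier_vec n" using ws by auto
  define r where "r j = (\<Sum>k<n. (cmod (ws ! j $ k))^2)" for j
  have rw: "\<And>j. j < n \<Longrightarrow> ws ! j \<bullet>c ws ! j = complex_of_real (r j)"
    unfolding r_def using wsc cscalar_self by (metis carrier_vecD)
  have rpos: "\<And>j. j < n \<Longrightarrow> r j > 0"
  proof -
    fix j assume j: "j < n"
    have "ws ! j \<bullet>c ws ! j \<noteq> 0" using corthogonalD[OF ws(2)] j ws(3) by auto
    hence "r j \<noteq> 0" using rw[OF j] by auto
    moreover have "r j \<ge> 0" unfolding r_def by (intro sum_nonneg) auto
    ultimately show "r j > 0" by auto
  qed
  define sc where "sc j = complex_of_real (1 / sqrt (r j))" for j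
  define W where "W = mat n n (\<lambda>(i,j). sc j * ws ! j $ i)"
  have Wc: "W \<in> carrier_mat n n" unfolding W_def by auto
  have "adjm W * W = 1\<^sub>m n"
  proof (rule eq_matI)
    fix i j assume "i < dim_row (1\<^sub>m n)" "j < dim_col (1\<^sub>m n)"
    hence i: "i < n" and j: "j < n" by auto
    have "(adjm W * W) $$ (i,j) = (\<Sum>k<n. cnj (sc i * ws ! i $ k) * (sc j * ws ! j $ k))"
      using i j Wc by (simp add: mult_entry W_def del: index_mult_mat)
    also have "\<dots> = cnj (sc i) * sc j * (ws ! j \<bullet>c ws ! i)"
      using wsc[OF i] wsc[OF j]
      unfolding scalar_prod_def atLeast0LessThan sum_distrib_left
      by (intro sum.cong refl) (auto simp: mult.commute mult.left_commute)
    also have "\<dots> = 1\<^sub>m n $$ (i,j)"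
    proof (cases "i = j")
      case True
      have e1: "cnj (sc j) * sc j * complex_of_real (r j) = complex_of_real ((1 / sqrt (r j)) * (1 / sqrt (r j)) * r j)"
        unfolding sc_def by (simp only: complex_cnj_complex_of_real of_real_mult)
      have e2: "(1 / sqrt (r j)) * (1 / sqrt (r j)) * r j = 1"
        using rpos[OF j] by (simp add: field_simps flip: power2_eq_square)
      show ?thesis using True rw[OF j] i e1 e2 by simp
    next
      case False
      have "ws ! j \<bullet>c ws ! i = 0" using corthogonalD[OF ws(2)] i j ws(3) False by auto
      thus ?thesis using False i j by simp
    qed
    finally show "(adjm W * W) $$ (i,j) = 1\<^sub>m n $$ (i,j)" .
  qed (use Wc in auto)
  moreover have "\<forall>i<n. W $$ (i,0) = sc 0 * v $ i" using n wsv by (simp add: W_def)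
  ultimately show ?thesis using Wc by blast
qed



lemma hermitian_decomp:
  assumes "A \<in> carrier_mat n n" "adjm A = A"
  shows "\<exists>U es. U \<in> carrier_mat n n \<and> length es = n \<and> adjm U * U = 1\<^sub>m n \<and>
     A = U * diagm es * adjm U"
  using assms
proof (induction n arbitrary: A)
  case 0
  show ?case
    by (rule exI[of _ "1\<^sub>m 0"], rule exI[of _ "[]"]) (use 0 in \<open>auto intro!: eq_matI\<close>)
next
  case (Suc m A)
  define n where "n = Suc m"
  have A: "A \<in> carrier_mat n n" and herm: "adjm A = A" using Suc n_def by auto
  have "degree (char_poly A) = n" using degree_monic_char_poly[OF A] by auto
  hence "\<not> constant (poly (char_poly A))" by (simp add: constant_degree n_def)
  then obtain e where "poly (char_poly A) e = 0" using fundamental_theorem_of_algebra by blast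
  hence "eigenvalue A e" using eigenvalue_root_char_poly[OF A] by simp
  then obtain v where ev: "eigenvector A v e" unfolding eigenvalue_def by blast
  hence v: "v \<in> carrier_vec n" and v0: "v \<noteq> 0\<^sub>v n" and Av: "A *\<^sub>v v = e \<cdot>\<^sub>v v"
    unfolding eigenvector_def using A by auto
  obtain W c where W: "W \<in> carrier_mat n n" and WW: "adjm W * W = 1\<^sub>m n"
    and W0: "\<forall>i<n. W $$ (i,0) = c * v $ i"
    using orthonormal_completion[OF v v0] by blast
  have WW': "W * adjm W = 1\<^sub>m n" using mat_mult_left_right_inverse[OF adjm_carrier[OF W] W WW] .
  have AW0: "(A * W) $$ (k,0) = e * W $$ (k,0)" if k: "k < n" for k
  proof -
    have "(A * W) $$ (k,0) = (\<Sum>l<n. A $$ (k,l) * W $$ (l,0))"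
      using A W k by (subst mult_entry) (auto simp: n_def)
    also have "\<dots> = c * (\<Sum>l<n. A $$ (k,l) * v $ l)"
      using W0 by (simp add: sum_distrib_left ac_simps)
    also have "(\<Sum>l<n. A $$ (k,l) * v $ l) = (A *\<^sub>v v) $ k"
      using A v k by (simp add: mult_mat_vec_def scalar_prod_def atLeast0LessThan)
    also have "\<dots> = e * v $ k" using Av v k by simp
    finally show ?thesis using W0 k by simp
  qed
  define A' where "A' = adjm W * A * W"
  have A'c: "A' \<in> carrier_mat n n" using A W unfolding A'_def by auto
  have hA': "adjm A' = A'"
  proof -
    have "adjm A' = adjm W * adjm (adjm W * A)"
      unfolding A'_def by (rule adjm_mult[of _ n n _ n]) (use A W in auto)
    also have "adjm (adjm W * A) = adjm A * W"
      by (subst adjm_mult[of _ n n _ n]) (use A W in auto)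
    finally show ?thesis unfolding A'_def herm using A W by (simp add: assoc_mult_mat[of _ n n _ n _ n])
  qed
  have A'col: "A' $$ (i,0) = (if i = 0 then e else 0)" if i: "i < n" for i
  proof -
    have "A' = adjm W * (A * W)" unfolding A'_def using A W by (simp add: assoc_mult_mat[of _ n n _ n _ n])
    hence "A' $$ (i,0) = (\<Sum>k<n. adjm W $$ (i,k) * (A * W) $$ (k,0))"
      using A W i by (simp del: index_mult_mat) (subst mult_entry, auto simp: n_def)
    also have "\<dots> = e * (\<Sum>k<n. adjm W $$ (i,k) * W $$ (k,0))"
      using AW0 by (simp add: sum_distrib_left mult.commute mult.left_commute)
    also have "(\<Sum>k<n. adjm W $$ (i,k) * W $$ (k,0)) = (adjm W * W) $$ (i,0)"
      using W i by (subst mult_entry) (auto simp: n_def)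
    also have "\<dots> = (if i = 0 then 1 else 0)" using WW i by (simp add: n_def)
    finally show ?thesis by simp
  qed
  have A'row: "A' $$ (0,j) = (if j = 0 then e else 0)" if j: "j < n" for j
  proof -
    have "A' $$ (0,j) = adjm A' $$ (0,j)" using hA' by simp
    also have "\<dots> = cnj (A' $$ (j,0))" using A'c j by (simp add: n_def)
    also have "\<dots> = (if j = 0 then cnj e else 0)" using A'col[OF j] by simp
    finally have *: "A' $$ (0,j) = (if j = 0 then cnj e else 0)" .
    have "A' $$ (0,0) = e" using A'col[of 0] by (simp add: n_def)
    with * show ?thesis by (cases "j = 0") auto
  qed
  define A3 where "A3 = mat m m (\<lambda>(i,j). A' $$ (Suc i, Suc j))"
  have A3c: "A3 \<in> carrier_mat m m" unfolding A3_def by auto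
  have hA3: "adjm A3 = A3"
  proof (rule eq_matI)
    fix i j assume "i < dim_row A3" "j < dim_col A3"
    hence i: "i < m" and j: "j < m" using A3c by auto
    have "A3 $$ (i,j) = adjm A' $$ (Suc i, Suc j)" using hA' i j by (simp add: A3_def)
    also have "\<dots> = cnj (A' $$ (Suc j, Suc i))" using A'c i j by (simp add: n_def)
    finally show "adjm A3 $$ (i,j) = A3 $$ (i,j)" using i j by (simp add: A3_def)
  qed (use A3c in auto)
  from Suc.IH[OF A3c hA3] obtain U3 es3 where U3: "U3 \<in> carrier_mat m m" and les3: "length es3 = m"
    and UU3: "adjm U3 * U3 = 1\<^sub>m m" and A3d: "A3 = U3 * diagm es3 * adjm U3" by blast
  define B where "B = mat n n (\<lambda>(i,j). if i = 0 \<and> j = 0 then 1 else if i = 0 \<or> j = 0 then 0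
     else U3 $$ (i - 1, j - 1))"
  have Bc: "B \<in> carrier_mat n n" unfolding B_def by auto
  define U where "U = W * B"
  define es where "es = e # es3"
  have Uc: "U \<in> carrier_mat n n" unfolding U_def using W Bc by auto
  have les: "length es = n" unfolding es_def n_def using les3 by simp
  have BB: "adjm B * B = 1\<^sub>m n"
  proof (rule eq_matI)
    fix i j assume "i < dim_row (1\<^sub>m n)" "j < dim_col (1\<^sub>m n)"
    hence i: "i < n" and j: "j < n" by auto
    have "(adjm B * B) $$ (i,j) = (\<Sum>k<n. cnj (B $$ (k,i)) * B $$ (k,j))"
      using Bc i j by (subst mult_entry) auto
    also have "\<dots> = cnj (B $$ (0,i)) * B $$ (0,j) + (\<Sum>k<m. cnj (B $$ (Suc k,i)) * B $$ (Suc k,j))"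
      unfolding n_def by (rule sum.lessThan_Suc_shift)
    also have "\<dots> = 1\<^sub>m n $$ (i,j)"
    proof (cases i)
      case 0
      then show ?thesis using i j by (cases j) (auto simp: B_def n_def)
    next
      case (Suc i')
      show ?thesis
      proof (cases j)
        case 0
        then show ?thesis using i j Suc by (auto simp: B_def n_def)
      next
        case (Suc j')
        have "(\<Sum>k<m. cnj (B $$ (Suc k,i)) * B $$ (Suc k,j)) = (\<Sum>k<m. cnj (U3 $$ (k,i')) * U3 $$ (k,j'))"
          using i j \<open>i = Suc i'\<close> Suc by (intro sum.cong refl) (auto simp: B_def n_def)
        also have "\<dots> = (adjm U3 * U3) $$ (i',j')"
          using U3 i j \<open>i = Suc i'\<close> Suc by (subst mult_entry) (auto simp: n_def)
        finally show ?thesis using UU3 i j \<open>i = Suc i'\<close> Suc by (auto simp: B_def n_def)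
      qed
    qed
    finally show "(adjm B * B) $$ (i,j) = 1\<^sub>m n $$ (i,j)" .
  qed (use Bc in auto)
  have UU: "adjm U * U = 1\<^sub>m n"
  proof -
    have "adjm U * U = adjm B * adjm W * (W * B)" unfolding U_def using W Bc by (simp add: adjm_mult)
    also have "\<dots> = adjm B * (adjm W * W) * B"
      using W Bc by (simp add: assoc_mult_mat[of _ n n _ n _ n] mult_carrier_mat[of _ n n _ n] adjm_carrier[OF W] adjm_carrier[OF Bc])
    also have "\<dots> = 1\<^sub>m n" using WW BB Bc by simp
    finally show ?thesis .
  qed
  have BDB: "B * diagm es * adjm B = A'"
  proof (rule eq_matI)
    fix i j assume "i < dim_row A'" "j < dim_col A'"
    hence i: "i < n" and j: "j < n" using A'c by auto
    have "(B * diagm es * adjm B) $$ (i,j) = (\<Sum>k<n. B $$ (i,k) * es ! k * cnj (B $$ (j,k)))"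
      by (rule XDY_entry[OF Bc Bc les i j])
    also have "\<dots> = B $$ (i,0) * es ! 0 * cnj (B $$ (j,0)) + (\<Sum>k<m. B $$ (i,Suc k) * es ! Suc k * cnj (B $$ (j,Suc k)))"
      unfolding n_def by (rule sum.lessThan_Suc_shift)
    also have "\<dots> = A' $$ (i,j)"
    proof (cases i)
      case 0
      then show ?thesis using i j A'row[OF j] by (cases j) (auto simp: B_def n_def es_def)
    next
      case (Suc i')
      show ?thesis
      proof (cases j)
        case 0
        then show ?thesis using i j Suc A'col[OF i] by (auto simp: B_def n_def)
      next
        case (Suc j')
        have "(\<Sum>k<m. B $$ (i,Suc k) * es ! Suc k * cnj (B $$ (j,Suc k))) = (\<Sum>k<m. U3 $$ (i',k) * es3 ! k * cnj (U3 $$ (j',k)))"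
          using i j \<open>i = Suc i'\<close> Suc by (intro sum.cong refl) (auto simp: B_def n_def es_def)
        also have "\<dots> = (U3 * diagm es3 * adjm U3) $$ (i',j')"
          using i j \<open>i = Suc i'\<close> Suc by (intro XDY_entry[symmetric, OF U3 U3 les3]) (auto simp: n_def)
        also have "\<dots> = A' $$ (i,j)" using A3d[symmetric] i j \<open>i = Suc i'\<close> Suc by (simp add: A3_def n_def)
        finally show ?thesis using i j \<open>i = Suc i'\<close> Suc by (auto simp: B_def n_def)
      qed
    qed
    finally show "(B * diagm es * adjm B) $$ (i,j) = A' $$ (i,j)" .
  qed (use A'c Bc les in auto)
  have "U * diagm es * adjm U = W * (B * diagm es * adjm B) * adjm W"
  proof -
    have D: "diagm es \<in> carrier_mat n n" using diagm_carrier[of es] les by simp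
    have "adjm U = adjm B * adjm W" unfolding U_def using W Bc by (simp add: adjm_mult)
    thus ?thesis unfolding U_def using W Bc D
      by (simp add: assoc_mult_mat[of _ n n _ n _ n] mult_carrier_mat[of _ n n _ n] adjm_carrier[OF W] adjm_carrier[OF Bc])
  qed
  also have "\<dots> = W * A' * adjm W" using BDB by simp
  also have "\<dots> = (W * adjm W) * A * (W * adjm W)"
    unfolding A'_def using W A by (simp add: assoc_mult_mat[of _ n n _ n _ n] mult_carrier_mat[of _ n n _ n] adjm_carrier[OF W])
  also have "\<dots> = A" using WW' A by simp
  finally show ?case using Uc les UU unfolding n_def by metis
qed



lemma sum_set_count_list:
  fixes f :: "complex \<Rightarrow> real"
  shows "(\<Sum>z\<in>set es. real (count_list es z) * f z) = sum_list (map f es)"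
proof (induction es)
  case Nil then show ?case by simp
next
  case (Cons a es)
  show ?case
  proof (cases "a \<in> set es")
    case True
    have "(\<Sum>z\<in>set (a # es). real (count_list (a # es) z) * f z)
        = (\<Sum>z\<in>set es. real (count_list es z) * f z + (if z = a then f z else 0))"
      using True by (intro sum.cong) (auto simp: insert_absorb algebra_simps)
    also have "\<dots> = sum_list (map f es) + f a"
      using True Cons by (simp add: sum.distrib sum.delta')
    finally show ?thesis by simp
  next
    case False
    have "(\<Sum>z\<in>set (a # es). real (count_list (a # es) z) * f z)
        = real (count_list (a # es) a) * f a + (\<Sum>z\<in>set es. real (count_list (a # es) z) * f z)"
      using False by simp
    also have "(\<Sum>z\<in>set es. real (count_list (a # es) z) * f z) = (\<Sum>z\<in>set es. real (count_list es z) * f z)"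
      using False by (intro sum.cong) auto
    finally show ?thesis using False Cons by (simp add: count_list_0_iff)
  qed
qed

lemma tr_pow_decomp:
  assumes A: "A \<in> carrier_mat n n" and U: "U \<in> carrier_mat n n" and UU: "adjm U * U = 1\<^sub>m n"
    and Ad: "A = U * diagm es * adjm U" and les: "length es = n"
  shows "tr_pow a A = (\<Sum>i<n. (Re (es ! i)) powr a)"
proof -
  have UU': "U * adjm U = 1\<^sub>m n" using mat_mult_left_right_inverse[OF U adjm_carrier[OF U] ] UU
    by (metis adjm_carrier mat_mult_left_right_inverse U)
  have D: "diagm es \<in> carrier_mat n n" using diagm_carrier[of es] les by simp
  have "similar_mat_wit A (diagm es) U (adjm U)"
    unfolding similar_mat_wit_def Let_def using A U D UU UU' Ad by auto
  hence "similar_mat A (diagm es)" unfolding similar_mat_def by blast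
  hence cpA: "char_poly A = char_poly (diagm es)" by (rule char_poly_similar)
  have ut: "upper_triangular (diagm es)" unfolding upper_triangular_def diagm_def by auto
  have dg: "diag_mat (diagm es) = es"
    unfolding diag_mat_def diagm_def by (intro nth_equalityI) auto
  have cp: "char_poly A = (\<Prod>a\<leftarrow>es. [:- a, 1:])"
    using cpA char_poly_upper_triangular[OF D ut] dg by simp
  have ord: "Polynomial.order z (char_poly A) = count_list es z" for z
  proof -
    have "Polynomial.order z (char_poly A) = sum_list (map (Polynomial.order z) (map (\<lambda>a. [:- a, 1:]) es))"
      unfolding cp by (subst order_prod_list) auto
    also have "\<dots> = count_list es z"
      by (induction es) (auto simp: order_linear')
    finally show ?thesis .
  qed
  have roots: "{z. poly (char_poly A) z = 0} = set es"
    unfolding cp by (induction es) (auto simp: poly_prod_list)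
  have "tr_pow a A = (\<Sum>z\<in>set es. real (count_list es z) * (Re z) powr a)"
    unfolding tr_pow_def roots ord ..
  also have "\<dots> = sum_list (map (\<lambda>z. (Re z) powr a) es)" by (rule sum_set_count_list)
  also have "\<dots> = (\<Sum>i<n. (Re (es ! i)) powr a)"
    using les by (simp add: sum_list_sum_nth atLeast0LessThan)
  finally show ?thesis .
qed



lemma tuples_alt: "tuples d n = {xs. set xs \<subseteq> {..<d} \<and> length xs = n}"
  unfolding tuples_def by auto

lemma finite_tuples[simp]: "finite (tuples d n)"
  unfolding tuples_alt by (rule finite_lists_length_eq) auto

lemma tuples_0[simp]: "tuples d 0 = {[]}"
  unfolding tuples_def by auto

lemma length_tuples: "xs \<in> tuples d n \<Longrightarrow> length xs = n"
  unfolding tuples_def by auto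

lemma append_tuples: "ys \<in> tuples d k \<Longrightarrow> z \<in> tuples d m \<Longrightarrow> ys @ z \<in> tuples d (k + m)"
  unfolding tuples_def by auto

lemma take_tuples: "xs \<in> tuples d n \<Longrightarrow> k \<le> n \<Longrightarrow> take k xs \<in> tuples d k"
  unfolding tuples_def by (auto dest: in_set_takeD)

lemma drop_tuples: "xs \<in> tuples d n \<Longrightarrow> k \<le> n \<Longrightarrow> drop k xs \<in> tuples d (n - k)"
  unfolding tuples_def by (auto dest: in_set_dropD)

lemma sum_tuples_append:
  "(\<Sum>xs\<in>tuples d (k + m). f xs) = (\<Sum>ys\<in>tuples d k. \<Sum>z\<in>tuples d m. f (ys @ z))"
proof -
  have bij: "bij_betw (\<lambda>(ys, z). ys @ z) (tuples d k \<times> tuples d m) (tuples d (k + m))"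
  proof (rule bij_betwI')
    fix x y assume "x \<in> tuples d k \<times> tuples d m" "y \<in> tuples d k \<times> tuples d m"
    then show "((case x of (ys, z) \<Rightarrow> ys @ z) = (case y of (ys, z) \<Rightarrow> ys @ z)) = (x = y)"
      by (cases x, cases y) (auto simp: tuples_def)
  next
    fix x assume "x \<in> tuples d k \<times> tuples d m"
    then show "(case x of (ys, z) \<Rightarrow> ys @ z) \<in> tuples d (k + m)"
      by (cases x) (auto simp: append_tuples)
  next
    fix xs assume xs: "xs \<in> tuples d (k + m)"
    show "\<exists>x\<in>tuples d k \<times> tuples d m. xs = (case x of (ys, z) \<Rightarrow> ys @ z)"
      by (rule bexI[of _ "(take k xs, drop k xs)"])
         (use xs take_tuples[OF xs, of k] drop_tuples[OF xs, of k] in auto)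
  qed
  have "(\<Sum>xs\<in>tuples d (k + m). f xs) = (\<Sum>p\<in>tuples d k \<times> tuples d m. f (case p of (ys, z) \<Rightarrow> ys @ z))"
    using sum.reindex_bij_betw[OF bij, of f] by (simp add: case_prod_beta)
  also have "\<dots> = (\<Sum>(ys, z)\<in>tuples d k \<times> tuples d m. f (ys @ z))"
    by (intro sum.cong refl) auto
  also have "\<dots> = (\<Sum>ys\<in>tuples d k. \<Sum>z\<in>tuples d m. f (ys @ z))"
    by (rule sum.cartesian_product[symmetric])
  finally show ?thesis .
qed

lemma sum_tuples_split:
  assumes "k \<le> n"
  shows "(\<Sum>xs\<in>tuples d n. f xs) = (\<Sum>ys\<in>tuples d k. \<Sum>z\<in>tuples d (n - k). f (ys @ z))"
  using sum_tuples_append[where d=d and k=k and m="n - k" and f=f] assms by simp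

lemma tuples_1: "tuples d 1 = (\<lambda>x. [x]) ` {..<d}"
proof -
  have "xs \<in> tuples d 1 \<longleftrightarrow> (\<exists>x<d. xs = [x])" for xs
    unfolding tuples_def by (cases xs) auto
  thus ?thesis by auto
qed

lemma sum_tuples_snoc:
  "(\<Sum>xs\<in>tuples d (Suc k). f xs) = (\<Sum>ys\<in>tuples d k. \<Sum>x<d. f (ys @ [x]))"
proof -
  have "(\<Sum>xs\<in>tuples d (k + 1). f xs) = (\<Sum>ys\<in>tuples d k. \<Sum>z\<in>tuples d 1. f (ys @ z))"
    by (rule sum_tuples_append)
  also have "\<dots> = (\<Sum>ys\<in>tuples d k. \<Sum>x<d. f (ys @ [x]))"
    unfolding tuples_1 by (subst sum.reindex) (auto simp: inj_on_def)
  finally show ?thesis by simp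
qed

lemma dec_tuples: "0 < d \<Longrightarrow> i < d ^ k \<Longrightarrow> dec d k i \<in> tuples d k"
proof (induction k arbitrary: i)
  case 0 then show ?case by (simp add: tuples_def)
next
  case (Suc k)
  have "i div d ^ k < d" using Suc.prems by (simp add: less_mult_imp_div_less mult.commute)
  moreover have "i mod d ^ k < d ^ k" using Suc.prems by simp
  ultimately show ?case using Suc.IH[of "i mod d ^ k"] Suc.prems by (simp add: tuples_def)
qed

lemma dec_inj: "inj_on (dec d k) {..<d ^ k}"
proof (induction k)
  case 0 then show ?case by (simp add: inj_on_def)
next
  case (Suc k)
  show ?case
  proof (rule inj_onI)
    fix i j assume i: "i \<in> {..<d ^ Suc k}" and j: "j \<in> {..<d ^ Suc k}" and e: "dec d (Suc k) i = dec d (Suc k) j"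
    from e have 1: "i div d ^ k = j div d ^ k" and 2: "dec d k (i mod d ^ k) = dec d k (j mod d ^ k)" by auto
    have "d ^ k > 0" using i by (cases "d = 0") auto
    hence "i mod d ^ k = j mod d ^ k" using Suc.IH 2 by (auto simp: inj_on_def)
    with 1 show "i = j" by (metis div_mult_mod_eq)
  qed
qed

lemma dec_bij: "0 < d \<Longrightarrow> bij_betw (dec d k) {..<d ^ k} (tuples d k)"
proof -
  assume d: "0 < d"
  have sub: "dec d k ` {..<d ^ k} \<subseteq> tuples d k" using dec_tuples[OF d] by auto
  have "card (dec d k ` {..<d ^ k}) = d ^ k" using card_image[OF dec_inj] by simp
  moreover have "card (tuples d k) = d ^ k" unfolding tuples_alt by (subst card_lists_length_eq) auto
  ultimately have "dec d k ` {..<d ^ k} = tuples d k"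
    using sub by (intro card_subset_eq) auto
  thus ?thesis using dec_inj unfolding bij_betw_def by auto
qed

lemma sum_tuples_dec: "0 < d \<Longrightarrow> (\<Sum>ys\<in>tuples d k. g ys) = (\<Sum>i<d ^ k. g (dec d k i))"
  using sum.reindex_bij_betw[OF dec_bij, of d g k] by simp

lemma normalized_d: "normalized d N psi \<Longrightarrow> 0 < N \<Longrightarrow> 0 < d"
proof (rule ccontr)
  assume "normalized d N psi" "0 < N" "\<not> 0 < d"
  hence "tuples d N = {}" unfolding tuples_def by (auto simp: length_greater_0_conv[symmetric] simp del: length_greater_0_conv dest!: nth_mem)
  thus False using \<open>normalized d N psi\<close> unfolding normalized_def by simp
qed



definition ip :: "'b set \<Rightarrow> ('b \<Rightarrow> complex) \<Rightarrow> ('b \<Rightarrow> complex) \<Rightarrow> complex" where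
  "ip S f g = (\<Sum>y\<in>S. cnj (f y) * g y)"

definition nrm :: "'b set \<Rightarrow> ('b \<Rightarrow> complex) \<Rightarrow> real" where
  "nrm S f = (\<Sum>y\<in>S. (cmod (f y))^2)"

definition orthonormal :: "'b set \<Rightarrow> nat \<Rightarrow> (nat \<Rightarrow> 'b \<Rightarrow> complex) \<Rightarrow> bool" where
  "orthonormal S m u \<longleftrightarrow> (\<forall>a<m. \<forall>b<m. ip S (u a) (u b) = (if a = b then 1 else 0))"

definition pr :: "'b set \<Rightarrow> nat \<Rightarrow> (nat \<Rightarrow> 'b \<Rightarrow> complex) \<Rightarrow> ('b \<Rightarrow> complex) \<Rightarrow> 'b \<Rightarrow> complex" where
  "pr S m u f = (\<lambda>y. \<Sum>a<m. u a y * ip S (u a) f)"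

lemma nrm_ip: "complex_of_real (nrm S f) = ip S f f"
  unfolding nrm_def ip_def of_real_sum
  by (intro sum.cong refl) (metis complex_norm_square mult.commute)

lemma ip_cnj: "ip S g f = cnj (ip S f g)"
  unfolding ip_def by (simp add: mult.commute)

lemma ip_add_right: "ip S f (\<lambda>y. g y + h y) = ip S f g + ip S f h"
  unfolding ip_def by (simp add: distrib_left sum.distrib)

lemma ip_diff_right: "ip S f (\<lambda>y. g y - h y) = ip S f g - ip S f h"
  unfolding ip_def by (simp add: right_diff_distrib sum_subtractf)

lemma ip_add_left: "ip S (\<lambda>y. g y + h y) f = ip S g f + ip S h f"
  unfolding ip_def by (simp add: distrib_right sum.distrib)

lemma ip_sum_right: "ip S f (\<lambda>y. \<Sum>a<m. c a * v a y) = (\<Sum>a<m. c a * ip S f (v a))"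
proof -
  have "ip S f (\<lambda>y. \<Sum>a<m. c a * v a y) = (\<Sum>y\<in>S. \<Sum>a<m. c a * (cnj (f y) * v a y))"
    unfolding ip_def by (simp add: sum_distrib_left mult_ac)
  also have "\<dots> = (\<Sum>a<m. \<Sum>y\<in>S. c a * (cnj (f y) * v a y))" by (rule sum.swap)
  also have "\<dots> = (\<Sum>a<m. c a * ip S f (v a))" unfolding ip_def by (simp add: sum_distrib_left)
  finally show ?thesis .
qed

lemma ip_sum_left: "ip S (\<lambda>y. \<Sum>a<m. v a y * c a) f = (\<Sum>a<m. cnj (c a) * ip S (v a) f)"
proof -
  have "ip S (\<lambda>y. \<Sum>a<m. v a y * c a) f = (\<Sum>y\<in>S. \<Sum>a<m. cnj (c a) * (cnj (v a y) * f y))"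
    unfolding ip_def cnj_sum complex_cnj_mult sum_distrib_right
    by (intro sum.cong refl) (simp add: mult_ac)
  also have "\<dots> = (\<Sum>a<m. \<Sum>y\<in>S. cnj (c a) * (cnj (v a y) * f y))" by (rule sum.swap)
  also have "\<dots> = (\<Sum>a<m. cnj (c a) * ip S (v a) f)" unfolding ip_def by (simp add: sum_distrib_left)
  finally show ?thesis .
qed

lemma ip_pr:
  assumes on: "orthonormal S m u" and b: "b < m"
  shows "ip S (u b) (pr S m u f) = ip S (u b) f"
proof -
  have "ip S (u b) (pr S m u f) = ip S (u b) (\<lambda>y. \<Sum>a<m. ip S (u a) f * u a y)"
    unfolding pr_def by (simp add: mult.commute)
  also have "\<dots> = (\<Sum>a<m. ip S (u a) f * ip S (u b) (u a))" by (rule ip_sum_right)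
  also have "\<dots> = (\<Sum>a<m. if a = b then ip S (u a) f else 0)"
    using on b unfolding orthonormal_def by (intro sum.cong refl) auto
  also have "\<dots> = ip S (u b) f" using b by (simp add: sum.delta')
  finally show ?thesis .
qed

lemma ip_pr_left:
  "ip S (pr S m u h) g = (\<Sum>a<m. cnj (ip S (u a) h) * ip S (u a) g)"
  unfolding pr_def by (rule ip_sum_left)

lemma pr_orth:
  assumes on: "orthonormal S m u"
  shows "ip S (pr S m u h) (\<lambda>y. f y - pr S m u f y) = 0"
proof -
  have "ip S (u a) (\<lambda>y. f y - pr S m u f y) = 0" if "a < m" for a
    using ip_pr[OF on that] by (simp add: ip_diff_right)
  thus ?thesis unfolding ip_pr_left by simp
qed

lemma pythag:
  assumes "ip S p q = 0"
  shows "nrm S (\<lambda>y. p y + q y) = nrm S p + nrm S q"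
proof -
  have "ip S q p = 0" using assms ip_cnj[of S q p] by simp
  hence "complex_of_real (nrm S (\<lambda>y. p y + q y)) = complex_of_real (nrm S p + nrm S q)"
    unfolding of_real_add nrm_ip using assms by (simp add: ip_add_right ip_add_left)
  thus ?thesis using of_real_eq_iff by blast
qed

lemma pr_diff: "pr S m u f y - pr S m u g y = pr S m u (\<lambda>y. f y - g y) y"
  unfolding pr_def by (simp add: ip_diff_right right_diff_distrib sum_subtractf)

lemma local_L1:
  assumes on: "orthonormal S m u"
  shows "nrm S (\<lambda>y. f y - pr S m u g y) = nrm S (\<lambda>y. f y - pr S m u f y) + nrm S (pr S m u (\<lambda>y. f y - g y))"
proof -
  have eq: "(\<lambda>y. f y - pr S m u g y) = (\<lambda>y. (f y - pr S m u f y) + pr S m u (\<lambda>y. f y - g y) y)"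
    using pr_diff[of S m u f _ g] by (auto simp: fun_eq_iff algebra_simps)
  have "ip S (\<lambda>y. f y - pr S m u f y) (pr S m u (\<lambda>y. f y - g y)) = 0"
    using pr_orth[OF on, of "\<lambda>y. f y - g y" f] ip_cnj by (metis complex_cnj_zero)
  thus ?thesis unfolding eq by (rule pythag)
qed

lemma local_L3:
  assumes on: "orthonormal S m u"
  shows "nrm S f = nrm S (pr S m u f) + nrm S (\<lambda>y. f y - pr S m u f y)"
proof -
  have eq: "f = (\<lambda>y. pr S m u f y + (f y - pr S m u f y))" by auto
  have "nrm S f = nrm S (\<lambda>y. pr S m u f y + (f y - pr S m u f y))" using eq by simp
  also have "\<dots> = nrm S (pr S m u f) + nrm S (\<lambda>y. f y - pr S m u f y)"
    by (rule pythag[OF pr_orth[OF on]])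
  finally show ?thesis .
qed

lemma nrm_nonneg: "finite S \<Longrightarrow> 0 \<le> nrm S f"
  unfolding nrm_def by (intro sum_nonneg) auto

lemma nrm_pr:
  assumes on: "orthonormal S m u"
  shows "nrm S (pr S m u f) = (\<Sum>a<m. (cmod (ip S (u a) f))^2)"
proof -
  have "complex_of_real (nrm S (pr S m u f)) = (\<Sum>a<m. cnj (ip S (u a) f) * ip S (u a) (pr S m u f))"
    unfolding nrm_ip ip_pr_left ..
  also have "\<dots> = (\<Sum>a<m. cnj (ip S (u a) f) * ip S (u a) f)"
    using ip_pr[OF on] by (intro sum.cong refl) auto
  also have "\<dots> = complex_of_real (\<Sum>a<m. (cmod (ip S (u a) f))^2)"
    unfolding of_real_sum by (intro sum.cong refl) (metis complex_norm_square mult.commute)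
  finally show ?thesis using of_real_eq_iff by blast
qed

definition P :: "nat \<Rightarrow> nat \<Rightarrow> nat \<Rightarrow> (nat \<Rightarrow> nat list \<Rightarrow> complex) \<Rightarrow> (nat list \<Rightarrow> complex) \<Rightarrow> nat list \<Rightarrow> complex" where
  "P d k m u f xs = (\<Sum>a<m. u a (take k xs) * ip (tuples d k) (u a) (\<lambda>y. f (y @ drop k xs)))"

lemma P_app:
  assumes "ys \<in> tuples d k"
  shows "P d k m u f (ys @ z) = pr (tuples d k) m u (\<lambda>y. f (y @ z)) ys"
  using length_tuples[OF assms] unfolding P_def pr_def by simp

lemma nrm_split:
  assumes "k \<le> n"
  shows "nrm (tuples d n) F = (\<Sum>z\<in>tuples d (n - k). nrm (tuples d k) (\<lambda>y. F (y @ z)))"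
  unfolding nrm_def sum_tuples_split[OF assms, where d=d and f="\<lambda>xs. (cmod (F xs))^2"]
  by (rule sum.swap)

lemma nrm_cong: "(\<And>y. y \<in> S \<Longrightarrow> f y = g y) \<Longrightarrow> nrm S f = nrm S g"
  unfolding nrm_def by (intro sum.cong refl) auto

lemma L1:
  assumes on: "orthonormal (tuples d k) m u" and kn: "k \<le> n"
  shows "nrm (tuples d n) (\<lambda>xs. f xs - P d k m u g xs)
       = nrm (tuples d n) (\<lambda>xs. f xs - P d k m u f xs) + nrm (tuples d n) (P d k m u (\<lambda>xs. f xs - g xs))"
proof -
  let ?S = "tuples d k" and ?T = "tuples d (n - k)"
  have e1: "nrm (tuples d n) (\<lambda>xs. f xs - P d k m u g xs)
      = (\<Sum>z\<in>?T. nrm ?S (\<lambda>y. f (y @ z) - pr ?S m u (\<lambda>y. g (y @ z)) y))"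
    unfolding nrm_split[OF kn, where d=d and F="\<lambda>xs. f xs - P d k m u g xs"]
    by (intro sum.cong refl nrm_cong) (simp add: P_app)
  have e2: "nrm (tuples d n) (\<lambda>xs. f xs - P d k m u f xs)
      = (\<Sum>z\<in>?T. nrm ?S (\<lambda>y. f (y @ z) - pr ?S m u (\<lambda>y. f (y @ z)) y))"
    unfolding nrm_split[OF kn, where d=d and F="\<lambda>xs. f xs - P d k m u f xs"]
    by (intro sum.cong refl nrm_cong) (simp add: P_app)
  have e3: "nrm (tuples d n) (P d k m u (\<lambda>xs. f xs - g xs))
      = (\<Sum>z\<in>?T. nrm ?S (pr ?S m u (\<lambda>y. f (y @ z) - g (y @ z))))"
    unfolding nrm_split[OF kn, where d=d and F="P d k m u (\<lambda>xs. f xs - g xs)"]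
    by (intro sum.cong refl nrm_cong) (simp add: P_app)
  have e4: "nrm ?S (\<lambda>y. f (y @ z) - pr ?S m u (\<lambda>y. g (y @ z)) y)
      = nrm ?S (\<lambda>y. f (y @ z) - pr ?S m u (\<lambda>y. f (y @ z)) y) + nrm ?S (pr ?S m u (\<lambda>y. f (y @ z) - g (y @ z)))" for z
    by (rule local_L1[OF on])
  show ?thesis unfolding e1 e2 e3 e4 sum.distrib ..
qed

lemma L2:
  assumes on: "orthonormal (tuples d k) m u" and kn: "k \<le> n"
  shows "nrm (tuples d n) (P d k m u h) \<le> nrm (tuples d n) h"
proof -
  let ?S = "tuples d k" and ?T = "tuples d (n - k)"
  have "nrm (tuples d n) (P d k m u h) = (\<Sum>z\<in>?T. nrm ?S (pr ?S m u (\<lambda>y. h (y @ z))))"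
    unfolding nrm_split[OF kn, where d=d and F="P d k m u h"]
    by (intro sum.cong refl nrm_cong) (simp add: P_app)
  also have "\<dots> \<le> (\<Sum>z\<in>?T. nrm ?S (\<lambda>y. h (y @ z)))"
  proof (rule sum_mono)
    fix z
    have "nrm ?S (\<lambda>y. h (y @ z)) = nrm ?S (pr ?S m u (\<lambda>y. h (y @ z))) + nrm ?S (\<lambda>y. h (y @ z) - pr ?S m u (\<lambda>y. h (y @ z)) y)"
      by (rule local_L3[OF on])
    moreover have "0 \<le> nrm ?S (\<lambda>y. h (y @ z) - pr ?S m u (\<lambda>y. h (y @ z)) y)" by (rule nrm_nonneg) simp
    ultimately show "nrm ?S (pr ?S m u (\<lambda>y. h (y @ z))) \<le> nrm ?S (\<lambda>y. h (y @ z))" by linarith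
  qed
  also have "\<dots> = nrm (tuples d n) h" by (rule nrm_split[OF kn, symmetric])
  finally show ?thesis .
qed

lemma L3:
  assumes on: "orthonormal (tuples d k) m u" and kn: "k \<le> n"
  shows "nrm (tuples d n) (\<lambda>xs. f xs - P d k m u f xs)
      = nrm (tuples d n) f - (\<Sum>a<m. \<Sum>z\<in>tuples d (n - k). (cmod (ip (tuples d k) (u a) (\<lambda>y. f (y @ z))))^2)"
proof -
  let ?S = "tuples d k" and ?T = "tuples d (n - k)"
  have "nrm (tuples d n) (\<lambda>xs. f xs - P d k m u f xs)
      = (\<Sum>z\<in>?T. nrm ?S (\<lambda>y. f (y @ z) - pr ?S m u (\<lambda>y. f (y @ z)) y))"
    unfolding nrm_split[OF kn, where d=d and F="\<lambda>xs. f xs - P d k m u f xs"]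
    by (intro sum.cong refl nrm_cong) (simp add: P_app)
  also have "\<dots> = (\<Sum>z\<in>?T. nrm ?S (\<lambda>y. f (y @ z)) - (\<Sum>a<m. (cmod (ip ?S (u a) (\<lambda>y. f (y @ z))))^2))"
  proof (rule sum.cong[OF refl])
    fix z
    have "nrm ?S (\<lambda>y. f (y @ z)) = nrm ?S (pr ?S m u (\<lambda>y. f (y @ z))) + nrm ?S (\<lambda>y. f (y @ z) - pr ?S m u (\<lambda>y. f (y @ z)) y)"
      by (rule local_L3[OF on])
    moreover have "nrm ?S (pr ?S m u (\<lambda>y. f (y @ z))) = (\<Sum>a<m. (cmod (ip ?S (u a) (\<lambda>y. f (y @ z))))^2)"
      by (rule nrm_pr[OF on])
    ultimately show "nrm ?S (\<lambda>y. f (y @ z) - pr ?S m u (\<lambda>y. f (y @ z)) y) = nrm ?S (\<lambda>y. f (y @ z)) - (\<Sum>a<m. (cmod (ip ?S (u a) (\<lambda>y. f (y @ z))))^2)"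
      by linarith
  qed
  also have "\<dots> = (\<Sum>z\<in>?T. nrm ?S (\<lambda>y. f (y @ z))) - (\<Sum>z\<in>?T. \<Sum>a<m. (cmod (ip ?S (u a) (\<lambda>y. f (y @ z))))^2)"
    by (rule sum_subtractf)
  also have "(\<Sum>z\<in>?T. \<Sum>a<m. (cmod (ip ?S (u a) (\<lambda>y. f (y @ z))))^2) = (\<Sum>a<m. \<Sum>z\<in>?T. (cmod (ip ?S (u a) (\<lambda>y. f (y @ z))))^2)"
    by (rule sum.swap)
  also have "(\<Sum>z\<in>?T. nrm ?S (\<lambda>y. f (y @ z))) = nrm (tuples d n) f" by (rule nrm_split[OF kn, symmetric])
  finally show ?thesis .
qed



function R :: "nat \<Rightarrow> nat \<Rightarrow> (nat \<Rightarrow> nat) \<Rightarrow> (nat \<Rightarrow> nat \<Rightarrow> nat list \<Rightarrow> complex) \<Rightarrow> (nat list \<Rightarrow> complex) \<Rightarrow> nat \<Rightarrow> nat list \<Rightarrow> complex" where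
  "R d N mm u psi j = (if j < N then P d j (mm j) (u j) (R d N mm u psi (Suc j)) else psi)"
  by pat_completeness auto
termination by (relation "measure (\<lambda>(d, N, mm, u, psi, j). N - j)") auto

declare R.simps[simp del]

definition Amat :: "nat \<Rightarrow> (nat \<Rightarrow> nat) \<Rightarrow> (nat \<Rightarrow> nat \<Rightarrow> nat list \<Rightarrow> complex) \<Rightarrow> nat \<Rightarrow> nat \<Rightarrow> complex mat" where
  "Amat d mm u k x = mat (mm (k - 1)) (mm k)
     (\<lambda>(b, a). \<Sum>y\<in>tuples d (k - 1). cnj (u (k - 1) b y) * u k a (y @ [x]))"

lemma Amat_carrier[simp]: "Amat d mm u k x \<in> carrier_mat (mm (k - 1)) (mm k)"
  unfolding Amat_def by simp

lemma mult_entry':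
  assumes "i < dim_row A" "j < dim_col B" "dim_col A = dim_row B"
  shows "(A * B) $$ (i,j) = (\<Sum>k<dim_row B. A $$ (i,k) * B $$ (k,j))"
  using assms by (simp add: index_mult_mat scalar_prod_def atLeast0LessThan)

lemma chain_lemma:
  assumes mN: "mm N = 1" and uN: "u N 0 = psi"
  shows "1 \<le> j \<Longrightarrow> j \<le> N \<Longrightarrow> length z = N + 1 - j \<Longrightarrow>
    mat_chain (Amat d mm u) (\<lambda>k. mm (k - 1)) j z \<in> carrier_mat (mm (j - 1)) 1 \<and>
    (\<forall>b<mm (j - 1). mat_chain (Amat d mm u) (\<lambda>k. mm (k - 1)) j z $$ (b, 0)
       = (\<Sum>y\<in>tuples d (j - 1). cnj (u (j - 1) b y) * R d N mm u psi j (y @ z)))"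
proof (induction z arbitrary: j)
  case Nil
  then show ?case by simp
next
  case (Cons x z')
  let ?A = "Amat d mm u" and ?D = "\<lambda>k. mm (k - 1)"
  show ?case
  proof (cases "z' = []")
    case True
    hence jN: "j = N" using Cons.prems by simp
    have ch: "mat_chain ?A ?D j (x # z') = ?A N x * 1\<^sub>m 1" using True jN mN by simp
    have c: "mat_chain ?A ?D j (x # z') \<in> carrier_mat (mm (j - 1)) 1"
      unfolding ch using jN mN Amat_carrier[of d mm u N x] by simp
    moreover have "mat_chain ?A ?D j (x # z') $$ (b, 0)
       = (\<Sum>y\<in>tuples d (j - 1). cnj (u (j - 1) b y) * R d N mm u psi j (y @ x # z'))" if b: "b < mm (j - 1)" for b
    proof -
      have "mat_chain ?A ?D j (x # z') $$ (b, 0) = ?A N x $$ (b, 0)"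
        unfolding ch using b jN mN Amat_carrier[of d mm u N x] by simp
      also have "\<dots> = (\<Sum>y\<in>tuples d (N - 1). cnj (u (N - 1) b y) * u N 0 (y @ [x]))"
        using b jN mN by (simp add: Amat_def)
      finally show ?thesis using True jN uN by (simp add: R.simps)
    qed
    ultimately show ?thesis by blast
  next
    case False
    have jN: "j < N" using Cons.prems False by (cases z') auto
    have IH: "mat_chain ?A ?D (Suc j) z' \<in> carrier_mat (mm j) 1"
      "\<And>c. c < mm j \<Longrightarrow> mat_chain ?A ?D (Suc j) z' $$ (c, 0)
          = (\<Sum>y\<in>tuples d j. cnj (u j c y) * R d N mm u psi (Suc j) (y @ z'))"
      using Cons.IH[of "Suc j"] Cons.prems jN by auto
    have ch: "mat_chain ?A ?D j (x # z') = ?A j x * mat_chain ?A ?D (Suc j) z'" by simp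
    have c: "mat_chain ?A ?D j (x # z') \<in> carrier_mat (mm (j - 1)) 1"
      unfolding ch using IH(1) Amat_carrier[of d mm u j x] by auto
    moreover have "mat_chain ?A ?D j (x # z') $$ (b, 0)
       = (\<Sum>y\<in>tuples d (j - 1). cnj (u (j - 1) b y) * R d N mm u psi j (y @ x # z'))" if b: "b < mm (j - 1)" for b
    proof -
      let ?I = "\<lambda>c. \<Sum>y\<in>tuples d j. cnj (u j c y) * R d N mm u psi (Suc j) (y @ z')"
      have "mat_chain ?A ?D j (x # z') $$ (b, 0) = (\<Sum>c<mm j. ?A j x $$ (b, c) * mat_chain ?A ?D (Suc j) z' $$ (c, 0))"
        unfolding ch using b IH(1) Amat_carrier[of d mm u j x] by (subst mult_entry') auto
      also have "\<dots> = (\<Sum>c<mm j. (\<Sum>y'\<in>tuples d (j - 1). cnj (u (j - 1) b y') * u j c (y' @ [x])) * ?I c)"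
        using b IH(2) by (intro sum.cong refl) (simp add: Amat_def)
      also have "\<dots> = (\<Sum>c<mm j. \<Sum>y'\<in>tuples d (j - 1). cnj (u (j - 1) b y') * (u j c (y' @ [x]) * ?I c))"
        by (simp add: sum_distrib_right mult.assoc)
      also have "\<dots> = (\<Sum>y'\<in>tuples d (j - 1). \<Sum>c<mm j. cnj (u (j - 1) b y') * (u j c (y' @ [x]) * ?I c))"
        by (rule sum.swap)
      also have "\<dots> = (\<Sum>y'\<in>tuples d (j - 1). cnj (u (j - 1) b y') * R d N mm u psi j (y' @ x # z'))"
      proof (rule sum.cong[OF refl])
        fix y' assume y': "y' \<in> tuples d (j - 1)"
        have ly: "length y' = j - 1" using length_tuples[OF y'] .
        have tk: "take j (y' @ x # z') = y' @ [x]" and dr: "drop j (y' @ x # z') = z'"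
          using ly Cons.prems by auto
        have "R d N mm u psi j (y' @ x # z') = P d j (mm j) (u j) (R d N mm u psi (Suc j)) (y' @ x # z')"
          using jN by (subst R.simps) simp
        also have "\<dots> = (\<Sum>c<mm j. u j c (y' @ [x]) * ?I c)"
          unfolding P_def tk dr ip_def ..
        finally show "(\<Sum>c<mm j. cnj (u (j - 1) b y') * (u j c (y' @ [x]) * ?I c))
            = cnj (u (j - 1) b y') * R d N mm u psi j (y' @ x # z')"
          by (simp add: sum_distrib_left)
      qed
      finally show ?thesis .
    qed
    ultimately show ?thesis by blast
  qed
qed

lemma R_is_mps:
  assumes N1: "1 \<le> N" and m0: "mm 0 = 1" and mN: "mm N = 1" and mD: "\<forall>k\<le>N. mm k \<le> D"
    and uN: "u N 0 = psi" and u0: "u 0 0 [] = 1"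
  shows "is_mps d N D (R d N mm u psi 1)"
  unfolding is_mps_def
proof (intro exI[of _ "Amat d mm u"] exI[of _ "\<lambda>k. mm (k - 1)"] conjI)
  let ?A = "Amat d mm u" and ?D = "\<lambda>k. mm (k - 1)"
  show "?D 1 = 1" using m0 by simp
  show "?D (N + 1) = 1" using mN by simp
  show "\<forall>k\<in>{1..N + 1}. ?D k \<le> D" using mD by auto
  show "\<forall>k\<in>{1..N}. \<forall>i<d. ?A k i \<in> carrier_mat (?D k) (?D (Suc k))"
  proof (intro ballI allI impI)
    fix k i show "?A k i \<in> carrier_mat (?D k) (?D (Suc k))" using Amat_carrier[of d mm u k i] by simp
  qed
  show "\<forall>xs\<in>tuples d N. R d N mm u psi 1 xs = mps_vec ?A ?D xs"
  proof
    fix xs assume xs: "xs \<in> tuples d N"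
    have "length xs = N + 1 - 1" using length_tuples[OF xs] by simp
    from chain_lemma[where mm=mm and N=N and u=u and psi=psi and j=1 and z=xs and d=d, OF mN uN] N1 this
    have "mat_chain ?A ?D 1 xs $$ (0, 0) = (\<Sum>y\<in>tuples d 0. cnj (u 0 0 y) * R d N mm u psi 1 (y @ xs))"
      using m0 by auto
    thus "R d N mm u psi 1 xs = mps_vec ?A ?D xs" unfolding mps_vec_def using u0 by simp
  qed
qed

lemma R_error:
  assumes on: "\<forall>k\<in>{1..<N}. orthonormal (tuples d k) (mm k) (u k)"
    and tk: "\<forall>k\<in>{1..<N}. nrm (tuples d N) (\<lambda>xs. psi xs - P d k (mm k) (u k) psi xs) \<le> t k"
  shows "1 \<le> j \<Longrightarrow> nrm (tuples d N) (\<lambda>xs. psi xs - R d N mm u psi j xs) \<le> (\<Sum>k\<in>{j..<N}. t k)"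
proof (induction "N - j" arbitrary: j)
  case 0
  hence "R d N mm u psi j = psi" by (subst R.simps) simp
  thus ?case using 0 by (simp add: nrm_def)
next
  case (Suc t' j)
  hence jN: "j < N" by simp
  have IH: "nrm (tuples d N) (\<lambda>xs. psi xs - R d N mm u psi (Suc j) xs) \<le> (\<Sum>k\<in>{Suc j..<N}. t k)"
    using Suc by auto
  let ?g = "R d N mm u psi (Suc j)"
  have Rj: "R d N mm u psi j = P d j (mm j) (u j) ?g" using jN by (subst R.simps) simp
  have onj: "orthonormal (tuples d j) (mm j) (u j)" using on jN Suc.prems by auto
  have "nrm (tuples d N) (\<lambda>xs. psi xs - R d N mm u psi j xs)
     = nrm (tuples d N) (\<lambda>xs. psi xs - P d j (mm j) (u j) psi xs) + nrm (tuples d N) (P d j (mm j) (u j) (\<lambda>xs. psi xs - ?g xs))"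
    unfolding Rj by (rule L1[OF onj]) (use jN in simp)
  also have "\<dots> \<le> t j + nrm (tuples d N) (\<lambda>xs. psi xs - ?g xs)"
    using tk jN Suc.prems L2[OF onj, of N "\<lambda>xs. psi xs - ?g xs"] by force
  also have "\<dots> \<le> t j + (\<Sum>k\<in>{Suc j..<N}. t k)" using IH by simp
  also have "\<dots> = (\<Sum>k\<in>{j..<N}. t k)" using jN by (simp add: sum.atLeast_Suc_lessThan)
  finally show ?case .
qed



lemma amgm_key:
  fixes A B a :: real
  assumes a: "0 < a" "a < 1" and A: "0 \<le> A" and B: "0 \<le> B"
  shows "A powr ((1 - a) / a) * B \<le> a * (1 - a) powr ((1 - a) / a) * (A + B) powr (1 / a)"
proof (cases "A = 0 \<or> B = 0")
  case True
  have "0 \<le> a * (1 - a) powr ((1 - a) / a) * (A + B) powr (1 / a)" using a by simp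
  thus ?thesis using True by auto
next
  case False
  hence Ap: "0 < A" and Bp: "0 < B" using A B by auto
  let ?b = "(1 - a) / a"
  have "(A / (1 - a)) powr (1 - a) * (B / a) powr a \<le> (1 - a) * (A / (1 - a)) + a * (B / a)"
    using a Ap Bp by (intro Youngs_inequality_0) auto
  also have "\<dots> = A + B" using a by simp
  finally have y: "(A / (1 - a)) powr (1 - a) * (B / a) powr a \<le> A + B" .
  have "((A / (1 - a)) powr (1 - a) * (B / a) powr a) powr (1 / a) \<le> (A + B) powr (1 / a)"
    by (rule powr_mono2) (use a y in auto)
  also have "((A / (1 - a)) powr (1 - a) * (B / a) powr a) powr (1 / a) = (A / (1 - a)) powr ?b * (B / a)"
  proof -
    have "((A / (1 - a)) powr (1 - a) * (B / a) powr a) powr (1 / a)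
        = ((A / (1 - a)) powr (1 - a)) powr (1 / a) * ((B / a) powr a) powr (1 / a)"
      using a Ap Bp by (simp add: powr_mult)
    also have "\<dots> = (A / (1 - a)) powr ?b * (B / a)"
      using a Ap Bp by (simp add: powr_powr)
    finally show ?thesis .
  qed
  finally have z: "(A / (1 - a)) powr ?b * (B / a) \<le> (A + B) powr (1 / a)" .
  have "A powr ?b * B = a * (1 - a) powr ?b * ((A / (1 - a)) powr ?b * (B / a))"
    using a Ap Bp by (simp add: powr_divide field_simps)
  also have "\<dots> \<le> a * (1 - a) powr ?b * (A + B) powr (1 / a)"
    by (rule mult_left_mono[OF z]) (use a in auto)
  finally show ?thesis .
qed

lemma tail_select:
  fixes lam :: "nat \<Rightarrow> real" and n D :: nat and a :: real
  assumes a: "0 < a" "a < 1" and nn: "\<forall>i<n. 0 \<le> lam i" and D: "1 \<le> D"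
  shows "\<exists>I \<subseteq> {..<n}. card I \<le> D \<and>
    (\<Sum>i\<in>{..<n} - I. lam i) \<le> a * (1 - a) powr ((1 - a) / a) * (\<Sum>i<n. lam i powr a) powr (1 / a) / real D powr ((1 - a) / a)"
proof (cases "n \<le> D")
  case True
  have "0 \<le> a * (1 - a) powr ((1 - a) / a) * (\<Sum>i<n. lam i powr a) powr (1 / a) / real D powr ((1 - a) / a)"
    using a by simp
  thus ?thesis using True by (intro exI[of _ "{..<n}"]) auto
next
  case False
  hence Dn: "D < n" by simp
  define b where "b = (1 - a) / a"
  have b0: "0 \<le> b" using a unfolding b_def by simp
  define S where "S = {I. I \<subseteq> {..<n} \<and> card I = D}"
  have finS: "finite S" unfolding S_def by (rule finite_subset[of _ "Pow {..<n}"]) auto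
  have neS: "{..<D} \<in> S" unfolding S_def using Dn by auto
  obtain I where IS: "I \<in> S" and Imax: "\<forall>J\<in>S. sum lam J \<le> sum lam I"
  proof -
    have "Max (sum lam ` S) \<in> sum lam ` S" using finS neS by (intro Max_in) auto
    then obtain I where "I \<in> S" "sum lam I = Max (sum lam ` S)" by auto
    moreover have "\<forall>J\<in>S. sum lam J \<le> Max (sum lam ` S)" using finS by auto
    ultimately show ?thesis using that by auto
  qed
  have Isub: "I \<subseteq> {..<n}" and cI: "card I = D" using IS unfolding S_def by auto
  have finI: "finite I" using Isub finite_subset by blast
  have Ine: "I \<noteq> {}" using cI D by auto
  have exch: "lam j \<le> lam i" if i: "i \<in> I" and j: "j \<in> {..<n} - I" for i j
  proof (rule ccontr)
    assume "\<not> lam j \<le> lam i"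
    define J where "J = insert j (I - {i})"
    have cp: "card I > 0" using finI i card_gt_0_iff by blast
    have "J \<in> S" unfolding S_def J_def using Isub i j cI finI cp by (auto simp: card_insert_if)
    moreover have "sum lam J = sum lam I - lam i + lam j"
      unfolding J_def using finI i j by (simp add: sum_diff1)
    ultimately show False using Imax \<open>\<not> lam j \<le> lam i\<close> by force
  qed
  define t where "t = Min (lam ` I)"
  have tI: "\<forall>i\<in>I. t \<le> lam i" unfolding t_def using finI by auto
  obtain i0 where i0: "i0 \<in> I" "t = lam i0" unfolding t_def using finI Ine
    by (metis (mono_tags, lifting) Min_in finite_imageI image_iff image_is_empty)
  have tC: "\<forall>j\<in>{..<n} - I. lam j \<le> t" using exch i0 by auto
  have t0: "0 \<le> t" using i0 Isub nn by auto
  define C where "C = {..<n} - I"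
  define A where "A = (\<Sum>i\<in>I. lam i powr a)"
  define B where "B = (\<Sum>j\<in>C. lam j powr a)"
  have A0: "0 \<le> A" unfolding A_def by (intro sum_nonneg) auto
  have B0: "0 \<le> B" unfolding B_def by (intro sum_nonneg) auto
  have T: "(\<Sum>i<n. lam i powr a) = A + B"
    unfolding A_def B_def C_def using Isub by (metis add.commute finite_lessThan sum.subset_diff)
  have At: "real D * t powr a \<le> A"
  proof -
    have "(\<Sum>i\<in>I. t powr a) \<le> A" unfolding A_def
      using tI t0 by (intro sum_mono powr_mono2) (use a in auto)
    thus ?thesis using cI by simp
  qed
  have tail1: "(\<Sum>j\<in>C. lam j) \<le> t powr (1 - a) * B"
  proof -
    have "lam j \<le> lam j powr a * t powr (1 - a)" if j: "j \<in> C" for j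
    proof (cases "lam j = 0")
      case True then show ?thesis by simp
    next
      case False
      hence lp: "0 < lam j" using nn j unfolding C_def by force
      have "lam j = lam j powr a * lam j powr (1 - a)" using lp by (simp add: powr_add[symmetric])
      also have "\<dots> \<le> lam j powr a * t powr (1 - a)"
        using tC j lp a unfolding C_def by (intro mult_left_mono powr_mono2) auto
      finally show ?thesis .
    qed
    hence "(\<Sum>j\<in>C. lam j) \<le> (\<Sum>j\<in>C. lam j powr a * t powr (1 - a))" by (rule sum_mono)
    also have "\<dots> = t powr (1 - a) * B" unfolding B_def by (simp add: sum_distrib_left mult.commute)
    finally show ?thesis .
  qed
  have Dp: "0 < real D" using D by simp
  have tb: "t powr (1 - a) \<le> (A / real D) powr b"
  proof -
    have "t powr (1 - a) = (t powr a) powr b" unfolding b_def using a by (simp add: powr_powr)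
    also have "\<dots> \<le> (A / real D) powr b"
      using At Dp b0 by (intro powr_mono2) (auto simp: field_simps)
    finally show ?thesis .
  qed
  have "(\<Sum>j\<in>C. lam j) \<le> (A / real D) powr b * B"
    using tail1 tb B0 by (meson mult_right_mono order_trans)
  also have "\<dots> = A powr b * B / real D powr b" using A0 Dp by (simp add: powr_divide)
  also have "\<dots> \<le> a * (1 - a) powr b * (A + B) powr (1 / a) / real D powr b"
    using amgm_key[OF a A0 B0] Dp unfolding b_def by (simp add: divide_right_mono)
  finally show ?thesis using Isub cI T unfolding C_def b_def by auto
qed



lemma quad_form:
  fixes x :: "nat \<Rightarrow> complex" and p :: "nat \<Rightarrow> 'z \<Rightarrow> complex"
  assumes "finite Z"
  shows "(\<Sum>j<n. (\<Sum>i<n. cnj (x i) * (\<Sum>z\<in>Z. p i z * cnj (p j z))) * x j)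
       = complex_of_real (\<Sum>z\<in>Z. (cmod (\<Sum>i<n. cnj (x i) * p i z))^2)"
proof -
  let ?F = "\<lambda>i j z. cnj (x i) * p i z * (cnj (p j z) * x j)"
  have "(\<Sum>j<n. (\<Sum>i<n. cnj (x i) * (\<Sum>z\<in>Z. p i z * cnj (p j z))) * x j) = (\<Sum>j<n. \<Sum>i<n. \<Sum>z\<in>Z. ?F i j z)"
    by (simp add: sum_distrib_left sum_distrib_right mult_ac)
  also have "\<dots> = (\<Sum>i<n. \<Sum>j<n. \<Sum>z\<in>Z. ?F i j z)" by (rule sum.swap)
  also have "\<dots> = (\<Sum>i<n. \<Sum>z\<in>Z. \<Sum>j<n. ?F i j z)" by (rule sum.cong[OF refl], rule sum.swap)
  also have "\<dots> = (\<Sum>z\<in>Z. \<Sum>i<n. \<Sum>j<n. ?F i j z)" by (rule sum.swap)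
  also have "\<dots> = (\<Sum>z\<in>Z. \<Sum>i<n. \<Sum>j<n. (cnj (x i) * p i z) * cnj (cnj (x j) * p j z))"
    by (intro sum.cong refl) (simp add: mult_ac)
  also have "\<dots> = (\<Sum>z\<in>Z. (\<Sum>i<n. cnj (x i) * p i z) * cnj (\<Sum>j<n. cnj (x j) * p j z))"
    by (simp only: cnj_sum sum_product)
  also have "\<dots> = (\<Sum>z\<in>Z. complex_of_real ((cmod (\<Sum>i<n. cnj (x i) * p i z))^2))"
    by (intro sum.cong refl) (rule complex_norm_square[symmetric])
  also have "\<dots> = complex_of_real (\<Sum>z\<in>Z. (cmod (\<Sum>i<n. cnj (x i) * p i z))^2)"
    by (rule of_real_sum[symmetric])
  finally show ?thesis .
qed

lemma parseval:
  fixes U :: "complex mat" and v :: "nat \<Rightarrow> complex"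
  assumes U: "U \<in> carrier_mat n n" and UU: "U * adjm U = 1\<^sub>m n"
  shows "(\<Sum>c<n. (cmod (\<Sum>i<n. cnj (U $$ (i,c)) * v i))^2) = (\<Sum>i<n. (cmod (v i))^2)"
proof -
  let ?F = "\<lambda>c i j. cnj (U $$ (i,c)) * v i * (U $$ (j,c) * cnj (v j))"
  have "complex_of_real (\<Sum>c<n. (cmod (\<Sum>i<n. cnj (U $$ (i,c)) * v i))^2)
      = (\<Sum>c<n. (\<Sum>i<n. cnj (U $$ (i,c)) * v i) * cnj (\<Sum>j<n. cnj (U $$ (j,c)) * v j))"
    unfolding of_real_sum by (intro sum.cong refl) (rule complex_norm_square)
  also have "\<dots> = (\<Sum>c<n. \<Sum>i<n. \<Sum>j<n. (cnj (U $$ (i,c)) * v i) * cnj (cnj (U $$ (j,c)) * v j))"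
    by (simp only: cnj_sum sum_product)
  also have "\<dots> = (\<Sum>c<n. \<Sum>i<n. \<Sum>j<n. ?F c i j)"
    by (intro sum.cong refl) (simp add: mult_ac)
  also have "\<dots> = (\<Sum>i<n. \<Sum>c<n. \<Sum>j<n. ?F c i j)" by (rule sum.swap)
  also have "\<dots> = (\<Sum>i<n. \<Sum>j<n. \<Sum>c<n. ?F c i j)" by (rule sum.cong[OF refl], rule sum.swap)
  also have "\<dots> = (\<Sum>i<n. \<Sum>j<n. v i * cnj (v j) * (U * adjm U) $$ (j,i))"
  proof (intro sum.cong refl)
    fix i j assume i: "i \<in> {..<n}" and j: "j \<in> {..<n}"
    have "(U * adjm U) $$ (j,i) = (\<Sum>c<n. U $$ (j,c) * cnj (U $$ (i,c)))"
      using U i j by (subst mult_entry) auto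
    thus "(\<Sum>c<n. ?F c i j) = v i * cnj (v j) * (U * adjm U) $$ (j,i)"
      by (simp add: sum_distrib_left mult_ac)
  qed
  also have "\<dots> = (\<Sum>i<n. \<Sum>j<n. if j = i then v i * cnj (v j) else 0)"
    using UU by (intro sum.cong refl) auto
  also have "\<dots> = (\<Sum>i<n. v i * cnj (v i))" by (simp add: sum.delta)
  also have "\<dots> = complex_of_real (\<Sum>i<n. (cmod (v i))^2)"
    unfolding of_real_sum by (intro sum.cong refl) (rule complex_norm_square[symmetric])
  finally show ?thesis using of_real_eq_iff by blast
qed



lemma cut_lemma:
  fixes psi :: "nat list \<Rightarrow> complex" and a s :: real
  assumes d: "0 < d" and kN: "k \<le> N" and nz: "normalized d N psi"
    and a: "0 < a" "a < 1" and ren: "renyi a (rdm d N psi k) \<le> s" and D: "1 \<le> D"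
  shows "\<exists>m u. m \<le> D \<and> orthonormal (tuples d k) m u \<and>
    nrm (tuples d N) (\<lambda>xs. psi xs - P d k m u psi xs)
      \<le> a * (1 - a) powr ((1 - a) / a) * exp ((1 - a) * s) powr (1 / a) / real D powr ((1 - a) / a)"
proof -
  define n where "n = d ^ k"
  define Z where "Z = tuples d (N - k)"
  define \<rho> where "\<rho> = rdm d N psi k"
  have \<rho>c: "\<rho> \<in> carrier_mat n n" unfolding \<rho>_def rdm_def n_def by simp
  have \<rho>ij: "\<rho> $$ (i,j) = (\<Sum>z\<in>Z. psi (dec d k i @ z) * cnj (psi (dec d k j @ z)))"
    if "i < n" "j < n" for i j
    using that unfolding \<rho>_def rdm_def n_def Z_def by simp
  have herm: "adjm \<rho> = \<rho>"
  proof (rule eq_matI)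
    fix i j assume "i < dim_row \<rho>" "j < dim_col \<rho>"
    hence i: "i < n" and j: "j < n" using \<rho>c by auto
    show "adjm \<rho> $$ (i,j) = \<rho> $$ (i,j)"
      using i j \<rho>c by (simp add: \<rho>ij cnj_sum mult.commute)
  qed (use \<rho>c in auto)
  obtain U es where U: "U \<in> carrier_mat n n" and les: "length es = n" and UU: "adjm U * U = 1\<^sub>m n"
    and \<rho>d: "\<rho> = U * diagm es * adjm U"
    using hermitian_decomp[OF \<rho>c herm] by blast
  have UU': "U * adjm U = 1\<^sub>m n" using mat_mult_left_right_inverse[OF adjm_carrier[OF U] U UU] .
  have Dc: "diagm es \<in> carrier_mat n n" using diagm_carrier[of es] les by simp
  have DD: "adjm U * \<rho> * U = diagm es"
  proof -
    have "adjm U * \<rho> * U = (adjm U * U) * diagm es * (adjm U * U)"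
      unfolding \<rho>d using U Dc
      by (simp add: assoc_mult_mat[of _ n n _ n _ n] mult_carrier_mat[of _ n n _ n] adjm_carrier[OF U])
    also have "\<dots> = diagm es" using UU Dc by simp
    finally show ?thesis .
  qed
  define w where "w c z = (\<Sum>i<n. cnj (U $$ (i,c)) * psi (dec d k i @ z))" for c z
  have es_eq: "es ! c = complex_of_real (\<Sum>z\<in>Z. (cmod (w c z))^2)" if c: "c < n" for c
  proof -
    have "es ! c = (adjm U * \<rho> * U) $$ (c,c)" unfolding DD using c les by (simp add: diagm_def)
    also have "\<dots> = (\<Sum>j<n. (adjm U * \<rho>) $$ (c,j) * U $$ (j,c))"
      using U \<rho>c c by (subst mult_entry) auto
    also have "\<dots> = (\<Sum>j<n. (\<Sum>i<n. cnj (U $$ (i,c)) * \<rho> $$ (i,j)) * U $$ (j,c))"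
    proof (rule sum.cong[OF refl])
      fix j assume j: "j \<in> {..<n}"
      have "(adjm U * \<rho>) $$ (c,j) = (\<Sum>i<n. adjm U $$ (c,i) * \<rho> $$ (i,j))"
        using U \<rho>c c j by (subst mult_entry) auto
      also have "\<dots> = (\<Sum>i<n. cnj (U $$ (i,c)) * \<rho> $$ (i,j))"
        using U c by (intro sum.cong refl) auto
      finally show "(adjm U * \<rho>) $$ (c,j) * U $$ (j,c) = (\<Sum>i<n. cnj (U $$ (i,c)) * \<rho> $$ (i,j)) * U $$ (j,c)"
        by simp
    qed
    also have "\<dots> = (\<Sum>j<n. (\<Sum>i<n. cnj (U $$ (i,c)) * (\<Sum>z\<in>Z. psi (dec d k i @ z) * cnj (psi (dec d k j @ z)))) * U $$ (j,c))"
      by (intro sum.cong refl) (simp add: \<rho>ij)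
    also have "\<dots> = complex_of_real (\<Sum>z\<in>Z. (cmod (\<Sum>i<n. cnj (U $$ (i,c)) * psi (dec d k i @ z)))^2)"
      by (rule quad_form[where x="\<lambda>i. U $$ (i,c)" and p="\<lambda>i z. psi (dec d k i @ z)" and Z=Z and n=n])
         (simp add: Z_def)
    finally show ?thesis unfolding w_def .
  qed
  define lam where "lam c = Re (es ! c)" for c
  have lam_eq: "lam c = (\<Sum>z\<in>Z. (cmod (w c z))^2)" if "c < n" for c
    unfolding lam_def es_eq[OF that] by simp
  have lam0: "\<forall>c<n. 0 \<le> lam c" using lam_eq by (simp add: sum_nonneg)
  have sum_lam: "(\<Sum>c<n. lam c) = 1"
  proof -
    have "(\<Sum>c<n. lam c) = (\<Sum>c<n. \<Sum>z\<in>Z. (cmod (w c z))^2)" by (simp add: lam_eq)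
    also have "\<dots> = (\<Sum>z\<in>Z. \<Sum>c<n. (cmod (w c z))^2)" by (rule sum.swap)
    also have "\<dots> = (\<Sum>z\<in>Z. \<Sum>i<n. (cmod (psi (dec d k i @ z)))^2)"
      unfolding w_def by (intro sum.cong refl parseval[OF U UU'])
    also have "\<dots> = (\<Sum>z\<in>Z. nrm (tuples d k) (\<lambda>y. psi (y @ z)))"
      unfolding nrm_def n_def by (intro sum.cong refl) (rule sum_tuples_dec[OF d, symmetric])
    also have "\<dots> = nrm (tuples d N) psi" unfolding Z_def by (rule nrm_split[OF kN, symmetric])
    also have "\<dots> = 1" using nz unfolding normalized_def nrm_def by simp
    finally show ?thesis .
  qed
  define T where "T = (\<Sum>c<n. lam c powr a)"
  have trp: "tr_pow a \<rho> = T"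
    unfolding T_def lam_def by (rule tr_pow_decomp[OF \<rho>c U UU \<rho>d les])
  have Tpos: "0 < T"
  proof -
    obtain c where c: "c < n" "0 < lam c"
    proof (rule ccontr)
      assume "\<not> thesis"
      hence "\<forall>c<n. lam c \<le> 0" using that by force
      hence "(\<Sum>c<n. lam c) \<le> 0" by (intro sum_nonpos) auto
      thus False using sum_lam by simp
    qed
    have "lam c powr a \<le> T" unfolding T_def using c by (intro member_le_sum) auto
    moreover have "0 < lam c powr a" using c by simp
    ultimately show ?thesis by linarith
  qed
  have "ln T \<le> (1 - a) * s"
  proof -
    have "1 / (1 - a) * ln T \<le> s" using ren trp unfolding renyi_def \<rho>_def by simp
    thus ?thesis using a by (simp add: field_simps)
  qed
  hence Texp: "T \<le> exp ((1 - a) * s)" using Tpos by (metis exp_le_cancel_iff exp_ln)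
  obtain I where I: "I \<subseteq> {..<n}" "card I \<le> D"
    and tail: "(\<Sum>i\<in>{..<n} - I. lam i) \<le> a * (1 - a) powr ((1 - a) / a) * T powr (1 / a) / real D powr ((1 - a) / a)"
    using tail_select[OF a lam0 D] unfolding T_def by blast
  have finI: "finite I" using I(1) finite_subset by blast
  define m where "m = card I"
  define g where "g a' = sorted_list_of_set I ! a'" for a'
  have gI: "g ` {..<m} = I" unfolding g_def m_def using finI
    by (metis atLeast0LessThan distinct_card distinct_sorted_list_of_set image_set map_nth
        set_sorted_list_of_set set_upt sorted_list_of_set(1))
  have ginj: "inj_on g {..<m}" unfolding g_def m_def using finI
    by (simp add: inj_on_def nth_eq_iff_index_eq)
  have gn: "g a' < n" if "a' < m" for a'
    using gI I(1) that by auto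
  define uc where "uc c ys = U $$ (inv_into {..<n} (dec d k) ys, c)" for c ys
  have uc_dec: "uc c (dec d k i) = U $$ (i, c)" if "i < n" for c i
    unfolding uc_def n_def using that dec_inj[of d k] by (simp add: n_def inv_into_f_f)
  define u where "u a' = uc (g a')" for a'
  have ip_u: "ip (tuples d k) (u a') f = (\<Sum>i<n. cnj (U $$ (i, g a')) * f (dec d k i))" for a' f
    unfolding ip_def u_def n_def sum_tuples_dec[OF d]
    by (intro sum.cong refl) (simp add: uc_dec[unfolded n_def])
  have on: "orthonormal (tuples d k) m u"
    unfolding orthonormal_def
  proof (intro allI impI)
    fix a' b' assume a': "a' < m" and b': "b' < m"
    have "ip (tuples d k) (u a') (u b') = (\<Sum>i<n. cnj (U $$ (i, g a')) * U $$ (i, g b'))"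
      unfolding ip_u by (intro sum.cong refl) (simp add: u_def uc_dec)
    also have "\<dots> = (adjm U * U) $$ (g a', g b')"
      using U gn[OF a'] gn[OF b'] by (subst mult_entry) auto
    also have "\<dots> = (if a' = b' then 1 else 0)"
      using UU gn[OF a'] gn[OF b'] ginj a' b' by (auto simp: inj_on_def)
    finally show "ip (tuples d k) (u a') (u b') = (if a' = b' then 1 else 0)" .
  qed
  have "nrm (tuples d N) (\<lambda>xs. psi xs - P d k m u psi xs)
      = nrm (tuples d N) psi - (\<Sum>a'<m. \<Sum>z\<in>tuples d (N - k). (cmod (ip (tuples d k) (u a') (\<lambda>y. psi (y @ z))))^2)"
    by (rule L3[OF on kN])
  also have "(\<Sum>a'<m. \<Sum>z\<in>tuples d (N - k). (cmod (ip (tuples d k) (u a') (\<lambda>y. psi (y @ z))))^2)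
      = (\<Sum>a'<m. lam (g a'))"
    using lam_eq gn unfolding ip_u w_def Z_def by simp
  also have "\<dots> = (\<Sum>c\<in>I. lam c)" using sum.reindex[OF ginj, of lam] gI by simp
  also have "nrm (tuples d N) psi = (\<Sum>c<n. lam c)" using sum_lam nz unfolding normalized_def nrm_def by simp
  also have "(\<Sum>c<n. lam c) - (\<Sum>c\<in>I. lam c) = (\<Sum>c\<in>{..<n} - I. lam c)"
    using I(1) by (simp add: sum_diff)
  also have "\<dots> \<le> a * (1 - a) powr ((1 - a) / a) * T powr (1 / a) / real D powr ((1 - a) / a)" by (rule tail)
  also have "\<dots> \<le> a * (1 - a) powr ((1 - a) / a) * exp ((1 - a) * s) powr (1 / a) / real D powr ((1 - a) / a)"
  proof -
    have "T powr (1 / a) \<le> exp ((1 - a) * s) powr (1 / a)"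
      using Tpos Texp a by (intro powr_mono2) auto
    thus ?thesis using a D by (intro divide_right_mono mult_left_mono) auto
  qed
  finally show ?thesis using I(2) on unfolding m_def by blast
qed



lemma exp_powr': "exp (x::real) powr (y::real) = exp (x * y)"
  by (simp add: powr_def mult.commute)

lemma final_arith:
  fixes a s e :: real and N D :: nat
  assumes a: "0 < a" "a < 1" and e: "0 < e" and N: "2 \<le> N"
    and DK: "real D \<ge> (1 - a) * exp s * (2 * (real N - 1) / e) powr (a / (1 - a))"
  shows "1 \<le> D" and "a * (1 - a) powr ((1 - a) / a) * exp ((1 - a) * s) powr (1 / a) / real D powr ((1 - a) / a)
     \<le> e / (2 * (real N - 1))"
proof -
  define b where "b = (1 - a) / a"
  define x where "x = 2 * (real N - 1) / e"
  have xp: "0 < x" unfolding x_def using e N by simp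
  define K where "K = (1 - a) * exp s * x powr (a / (1 - a))"
  have Kp: "0 < K" unfolding K_def using a xp by simp
  have DK': "K \<le> real D" using DK unfolding K_def x_def .
  thus D1: "1 \<le> D" using Kp by linarith
  have b0: "0 < b" unfolding b_def using a by simp
  have "K powr b = (1 - a) powr b * exp s powr b * (x powr (a / (1 - a))) powr b"
    unfolding K_def using a xp by (simp add: powr_mult)
  also have "(x powr (a / (1 - a))) powr b = x"
    unfolding b_def using a xp by (simp add: powr_powr)
  also have "exp s powr b = exp (s * b)" by (rule exp_powr')
  finally have Kb: "K powr b = (1 - a) powr b * exp (s * b) * x" .
  have Db: "K powr b \<le> real D powr b" using Kp DK' b0 by (intro powr_mono2) auto
  have E: "exp ((1 - a) * s) powr (1 / a) = exp (s * b)"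
    unfolding exp_powr' b_def by (simp add: field_simps)
  have pos: "0 < (1 - a) powr b * exp (s * b) * x" using a xp by simp
  have Dp: "0 < real D powr b" using D1 by simp
  have "a * (1 - a) powr b * exp ((1 - a) * s) powr (1 / a) / real D powr b
      \<le> a * (1 - a) powr b * exp (s * b) / ((1 - a) powr b * exp (s * b) * x)"
    unfolding E using Db Kb pos a Dp by (intro divide_left_mono) auto
  also have "\<dots> = a / x" using a by (simp add: field_simps)
  also have "\<dots> \<le> 1 / x" using a xp by (simp add: divide_right_mono)
  also have "\<dots> = e / (2 * (real N - 1))" unfolding x_def by simp
  finally show "a * (1 - a) powr ((1 - a) / a) * exp ((1 - a) * s) powr (1 / a) / real D powr ((1 - a) / a)
     \<le> e / (2 * (real N - 1))" unfolding b_def .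
qed

theorem mainTheorem3:
  fixes d N :: nat and psi :: "nat list \<Rightarrow> complex" and \<alpha> s \<epsilon> :: real and D :: nat
  assumes "N \<ge> 2"
    and "normalized d N psi"
    and "0 < \<alpha>" and "\<alpha> < 1"
    and "\<forall>k\<in>{1..N-1}. renyi \<alpha> (rdm d N psi k) \<le> s"
    and "\<epsilon> > 0"
    and "real D \<ge> (1 - \<alpha>) * exp s * (2 * (real N - 1) / \<epsilon>) powr (\<alpha> / (1 - \<alpha>))"
  shows "\<exists>phi. is_mps d N D phi \<and> dist_sq d N psi phi \<le> \<epsilon>"
proof -
  note N = assms(1) and nz = assms(2) and a = assms(3,4) and ren = assms(5) and e = assms(6) and DK = assms(7)
  have d: "0 < d" using normalized_d[OF nz] N by simp
  have D1: "1 \<le> D" using final_arith(1)[OF a e N DK] .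
  define Bd where "Bd = \<alpha> * (1 - \<alpha>) powr ((1 - \<alpha>) / \<alpha>) * exp ((1 - \<alpha>) * s) powr (1 / \<alpha>) / real D powr ((1 - \<alpha>) / \<alpha>)"
  have Bd: "Bd \<le> \<epsilon> / (2 * (real N - 1))" unfolding Bd_def using final_arith(2)[OF a e N DK] .
  have "\<forall>k\<in>{1..<N}. \<exists>p. fst p \<le> D \<and> orthonormal (tuples d k) (fst p) (snd p) \<and>
      nrm (tuples d N) (\<lambda>xs. psi xs - P d k (fst p) (snd p) psi xs) \<le> Bd"
  proof
    fix k assume k: "k \<in> {1..<N}"
    have "renyi \<alpha> (rdm d N psi k) \<le> s" using ren k by auto
    moreover have kN: "k \<le> N" using k by simp
    ultimately have "\<exists>m u. m \<le> D \<and> orthonormal (tuples d k) m u \<and>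
      nrm (tuples d N) (\<lambda>xs. psi xs - P d k m u psi xs) \<le> Bd"
      using cut_lemma[OF d kN nz a _ D1] unfolding Bd_def by blast
    then
    obtain m u where "m \<le> D \<and> orthonormal (tuples d k) m u \<and>
      nrm (tuples d N) (\<lambda>xs. psi xs - P d k m u psi xs) \<le> Bd" by blast
    thus "\<exists>p. fst p \<le> D \<and> orthonormal (tuples d k) (fst p) (snd p) \<and>
      nrm (tuples d N) (\<lambda>xs. psi xs - P d k (fst p) (snd p) psi xs) \<le> Bd"
      by (intro exI[of _ "(m, u)"]) simp
  qed
  then obtain f where f: "\<forall>k\<in>{1..<N}. fst (f k) \<le> D \<and> orthonormal (tuples d k) (fst (f k)) (snd (f k)) \<and>
      nrm (tuples d N) (\<lambda>xs. psi xs - P d k (fst (f k)) (snd (f k)) psi xs) \<le> Bd"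
    by (metis bchoice)
  define mm where "mm k = (if k = 0 \<or> k = N then 1 else fst (f k))" for k
  define u where "u k = (if k = 0 then (\<lambda>_ _. 1) else if k = N then (\<lambda>_. psi) else snd (f k))" for k
  define phi where "phi = R d N mm u psi 1"
  have N1: "1 \<le> N" using N by simp
  have "is_mps d N D phi" unfolding phi_def
  proof (rule R_is_mps[OF N1])
    show "mm 0 = 1" "mm N = 1" by (auto simp: mm_def)
    show "\<forall>k\<le>N. mm k \<le> D" using f D1 by (auto simp: mm_def)
    show "u N 0 = psi" "u 0 0 [] = 1" using N by (auto simp: u_def)
  qed
  moreover have "dist_sq d N psi phi \<le> \<epsilon>"
  proof -
    have on: "\<forall>k\<in>{1..<N}. orthonormal (tuples d k) (mm k) (u k)" using f by (auto simp: mm_def u_def)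
    have tk: "\<forall>k\<in>{1..<N}. nrm (tuples d N) (\<lambda>xs. psi xs - P d k (mm k) (u k) psi xs) \<le> Bd"
      using f by (auto simp: mm_def u_def)
    have "dist_sq d N psi phi = nrm (tuples d N) (\<lambda>xs. psi xs - R d N mm u psi 1 xs)"
      unfolding dist_sq_def nrm_def phi_def ..
    also have "\<dots> \<le> (\<Sum>k\<in>{1..<N}. Bd)" by (rule R_error[OF on tk]) simp
    also have "\<dots> = (real N - 1) * Bd" using N1 by (simp add: of_nat_diff)
    also have "\<dots> \<le> (real N - 1) * (\<epsilon> / (2 * (real N - 1)))"
      using Bd N by (intro mult_left_mono) auto
    also have "\<dots> = \<epsilon> / 2" using N by (simp add: field_simps)
    also have "\<dots> \<le> \<epsilon>" using e by simp
    finally show ?thesis .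
  qed
  ultimately show ?thesis by blast
qed


end
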